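(* Let $D$ be a square-free integer with $D\equiv 2\pmod 4$, let $\mathbb{Z}[\sqrt{D}]=\{x+y\sqrt D: x,y\in\mathbb{Z}\}$, and suppose that $2$ is irreducible but not prime in $\mathbb{Z}[\sqrt{D}]$. Let $z=z_1+z_2\sqrt{D}\in I_2(D)$ with $\lVert z\rVert=2k$ for some integer $k\equiv 3\pmod 4$. Then $A(2,z)$ has property (CZ) if and only if the quadratic Diophantine equation $$0=(2+k)b_1^2-(2+k)Db_2^2-2z_1b_1+2z_2Db_2-2$$ has an integer solution $(b_1,b_2)$.
   Context: $\bar z=z_1-z_2\sqrt D$ is the conjugate and $\lVert z\rVert=z\bar z=z_1^2-Dz_2^2$ the norm. $I_2(D)$ is the set of all non-unit $z\in\mathbb{Z}[\sqrt{D}]$ such that $z\notin\langle 2\rangle$ but there exists $m\notin\langle 2\rangle$ with $zm\in\langle 2\rangle$. $A(2,z)=\begin{pmatrix} 2 & z\\ \bar z & \lVert z\rVert/2\end{pmatrix}$. A matrix $A(p,z)$ has property (CZ) if there exist $a,b,c\in\mathbb{Z}[\sqrt{D}]$ with $a(1-a)=bc$ such that $A(p,z)=\begin{pmatrix} a&b\\ c&1-a\end{pmatrix}\begin{pmatrix}\bar a&\bar c\\ \bar b&1-\bar a\end{pmatrix}$. *)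

theory Defs
  imports "HOL-Computational_Algebra.Squarefree"
begin

text \<open>Elements z1 + z2 sqrt D of Z[sqrt D] are represented as pairs (z1, z2) of integers;
  the ring operations depend on the parameter D.\<close>

type_synonym zd = "int \<times> int"

definition zadd :: "zd \<Rightarrow> zd \<Rightarrow> zd" where
  "zadd x y = (fst x + fst y, snd x + snd y)"

definition zsub :: "zd \<Rightarrow> zd \<Rightarrow> zd" where
  "zsub x y = (fst x - fst y, snd x - snd y)"

definition zmul :: "int \<Rightarrow> zd \<Rightarrow> zd \<Rightarrow> zd" where
  "zmul D x y = (fst x * fst y + D * snd x * snd y, fst x * snd y + snd x * fst y)"

definition zconj :: "zd \<Rightarrow> zd" where
  "zconj x = (fst x, - snd x)"

definition znorm :: "int \<Rightarrow> zd \<Rightarrow> int" where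
  "znorm D x = fst x ^ 2 - D * snd x ^ 2"

definition zunit :: "int \<Rightarrow> zd \<Rightarrow> bool" where
  "zunit D x \<longleftrightarrow> (\<exists>w. zmul D x w = (1, 0))"

definition zdvd :: "int \<Rightarrow> zd \<Rightarrow> zd \<Rightarrow> bool" where
  "zdvd D x y \<longleftrightarrow> (\<exists>w. y = zmul D x w)"

definition in_ideal2 :: "int \<Rightarrow> zd \<Rightarrow> bool" where
  "in_ideal2 D x \<longleftrightarrow> zdvd D (2, 0) x"

definition zirreducible :: "int \<Rightarrow> zd \<Rightarrow> bool" where
  "zirreducible D p \<longleftrightarrow> p \<noteq> (0, 0) \<and> \<not> zunit D p \<and>
     (\<forall>a b. p = zmul D a b \<longrightarrow> zunit D a \<or> zunit D b)"

definition zprime :: "int \<Rightarrow> zd \<Rightarrow> bool" where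
  "zprime D p \<longleftrightarrow> p \<noteq> (0, 0) \<and> \<not> zunit D p \<and>
     (\<forall>a b. zdvd D p (zmul D a b) \<longrightarrow> zdvd D p a \<or> zdvd D p b)"

definition I2 :: "int \<Rightarrow> zd set" where
  "I2 D = {z. \<not> zunit D z \<and> \<not> in_ideal2 D z \<and>
              (\<exists>m. \<not> in_ideal2 D m \<and> in_ideal2 D (zmul D z m))}"

text \<open>2x2 matrices over Z[sqrt D], as (entry11, entry12, entry21, entry22).\<close>
type_synonym zmat = "zd \<times> zd \<times> zd \<times> zd"

definition zmatmul :: "int \<Rightarrow> zmat \<Rightarrow> zmat \<Rightarrow> zmat" where
  "zmatmul D M N = (case M of (m11, m12, m21, m22) \<Rightarrow> case N of (n11, n12, n21, n22) \<Rightarrow>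
     (zadd (zmul D m11 n11) (zmul D m12 n21), zadd (zmul D m11 n12) (zmul D m12 n22),
      zadd (zmul D m21 n11) (zmul D m22 n21), zadd (zmul D m21 n12) (zmul D m22 n22)))"

definition A2 :: "int \<Rightarrow> zd \<Rightarrow> zmat" where
  "A2 D z = ((2, 0), z, zconj z, (znorm D z div 2, 0))"

definition CZ :: "int \<Rightarrow> zmat \<Rightarrow> bool" where
  "CZ D M \<longleftrightarrow> (\<exists>a b c. zmul D a (zsub (1, 0) a) = zmul D b c \<and>
     M = zmatmul D (a, b, c, zsub (1, 0) a)
                   (zconj a, zconj c, zconj b, zsub (1, 0) (zconj a)))"

end

theory Submission
  imports Defs
begin

lemma fwd_alg:
  fixes D k z1 z2 b1 b2 a1 a2 c1 c2 :: int
  assumes hz: "z1^2 - D*z2^2 = 2*k"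
  and i1: "a1*(1-a1) - D*a2*a2 = b1*c1 + D*b2*c2"
  and i2: "a2*(1-a1) - a1*a2 = b1*c2 + b2*c1"
  and e11: "a1*a1 - D*a2*a2 + (b1*b1 - D*b2*b2) = 2"
  and e21a: "z1 = c1*a1 - D*c2*a2 + ((1-a1)*b1 + D*a2*b2)"
  and e21b: "- z2 = c2*a1 - c1*a2 + (-(a2*b1) - (1-a1)*b2)"
  shows "0 = (2 + k) * b1 ^ 2 - (2 + k) * D * b2 ^ 2 - 2 * z1 * b1 + 2 * z2 * D * b2 - 2"
proof -
  have s1: "2*a1 = 2 - (b1*z1 - D*b2*z2)" using i1 i2 e11 e21a e21b by algebra
  have s2: "2*a2 = b1*z2 - b2*z1" using i1 i2 e11 e21a e21b by algebra
  have "4*(a1*a1 - D*a2*a2) = (2*a1)^2 - D*(2*a2)^2" by algebra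
  also have "\<dots> = (2 - (b1*z1 - D*b2*z2))^2 - D*(b1*z2 - b2*z1)^2" using s1 s2 by simp
  finally have "4*(a1*a1 - D*a2*a2) = (2 - (b1*z1 - D*b2*z2))^2 - D*(b1*z2 - b2*z1)^2" .
  then show ?thesis using e11 hz by algebra
qed

context
  fixes D k z1 z2 b1 b2 a1 a2 c1 c2 :: int
  assumes hz: "z1^2 - D*z2^2 = 2*k"
  and ha1: "2*a1 = 2 - (b1*z1 - D*b2*z2)"
  and ha2: "2*a2 = -(b2*z1 - b1*z2)"
  and hc1: "2*c1 = a1*z1 - D*a2*z2"
  and hc2: "2*c2 = a2*z1 - a1*z2"
  and heq: "0 = (2 + k) * b1 ^ 2 - (2 + k) * D * b2 ^ 2 - 2 * z1 * b1 + 2 * z2 * D * b2 - 2"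
begin
lemma g1: "a1*(1-a1) + D*a2*(-a2) = b1*c1 + D*b2*c2" using hz ha1 ha2 hc1 hc2 heq by algebra
lemma g2: "a1*(-a2) + a2*(1-a1) = b1*c2+b2*c1" using hz ha1 ha2 hc1 hc2 heq by algebra
lemma g3: "a1*a1 + D*a2*(-a2) + (b1*b1 + D*b2*(-b2)) = 2" using hz ha1 ha2 hc1 hc2 heq by algebra
lemma g5: "a1*c1 + D*a2*(-c2) + (b1*(1-a1) + D*b2*a2) = z1" using hz ha1 ha2 hc1 hc2 heq by algebra
lemma g6: "a1*(-c2) + a2*c1 + (b1*a2 + b2*(1-a1)) = z2" using hz ha1 ha2 hc1 hc2 heq by algebra
lemma g7: "c1*c1 + D*c2*(-c2) + ((1-a1)*(1-a1) + D*(-a2)*a2) = k"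
proof -
  have e1: "4*(c1*c1 - D*c2*c2) = (a1*a1 - D*a2*a2)*(z1^2 - D*z2^2)" using hc1 hc2 by algebra
  have e2: "4*((1-a1)*(1-a1) - D*a2*a2) = (b1*b1 - D*b2*b2)*(z1^2 - D*z2^2)" using ha1 ha2 by algebra
  have "4*(c1*c1 + D*c2*(-c2) + ((1-a1)*(1-a1) + D*(-a2)*a2)) = 2*k*(a1*a1 + D*a2*(-a2) + (b1*b1 + D*b2*(-b2)))"
    using e1[unfolded hz] e2[unfolded hz] by algebra
  then show ?thesis using g3 by simp
qed
end

lemma no21: "2*(x::int) \<noteq> 2*y+1" by presburger
lemma no42: "4*(x::int) \<noteq> 4*y+2" by presburger

lemma parity:
  fixes D k z1 z2 b1 b2 :: int
  assumes hD: "D mod 4 = 2" and hk: "k mod 4 = 3"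
  and hz: "z1^2 - D*z2^2 = 2*k"
  and heq: "0 = (2 + k) * b1 ^ 2 - (2 + k) * D * b2 ^ 2 - 2 * z1 * b1 + 2 * z2 * D * b2 - 2"
  shows "\<exists>a1 a2 c1 c2. 2*a1 = 2 - (b1*z1 - D*b2*z2) \<and> 2*a2 = -(b2*z1 - b1*z2)
     \<and> 2*c1 = a1*z1 - D*a2*z2 \<and> 2*c2 = a2*z1 - a1*z2"
proof -
  have "D = 4*(D div 4) + 2" using div_mult_mod_eq[of D 4] hD by linarith
  then obtain d where d: "D = 4*d+2" by blast
  have "k = 4*(k div 4) + 3" using div_mult_mod_eq[of k 4] hk by linarith
  then obtain j where j: "k = 4*j+3" by blast
  have "z1^2 = 2*(k + (2*d+1)*z2^2)" using hz d by (simp add: algebra_simps)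
  then have "even (z1^2)" by simp
  then have "even z1" by simp
  then obtain w where w: "z1 = 2*w" by blast
  have "odd z2"
  proof
    assume "even z2" then obtain f where f: "z2 = 2*f" by blast
    have "4*(w^2 - D*f^2) = 4*(2*j+1) + 2" using hz w f j by algebra
    then show False using no42 by blast
  qed
  then obtain f where f: "z2 = 2*f+1" by (metis oddE)
  have "even b1"
  proof (rule ccontr)
    assume "\<not> even b1" then obtain g where g: "b1 = 2*g+1" by (metis oddE)
    have "2*0 = 2*((4*j+5)*2*(g^2+g) + 2*j+2 - (4*j+5)*(2*d+1)*b2^2 - 2*w*b1 + z2*D*b2 - 1) + 1"
      using heq j g d w by algebra
    then show False using no21 by blast
  qed
  then obtain g where g: "b1 = 2*g" by blast
  have "odd b2"
  proof
    assume "even b2" then obtain e where e: "b2 = 2*e" by blast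
    have "4*((k+2)*(g^2 - D*e^2) - 2*w*g + z2*D*e) = 4*0 + 2"
      using heq g e w by algebra
    then show False using no42 by blast
  qed
  then obtain e where e: "b2 = 2*e+1" by (metis oddE)
  define a1 where "a1 = 1 - 2*g*w + (2*d+1)*(2*e+1)*(2*f+1)"
  define a2 where "a2 = -((2*e+1)*w - g*(2*f+1))"
  have "even a1" unfolding a1_def by simp
  then obtain h where h: "a1 = 2*h" by blast
  define c1 where "c1 = a1*w - (2*d+1)*a2*z2"
  define c2 where "c2 = a2*w - h*z2"
  have 1: "2*a1 = 2 - (b1*z1 - D*b2*z2)" using a1_def g e d w f by algebra
  have 2: "2*a2 = -(b2*z1 - b1*z2)" using a2_def g e w f by algebra
  have 3: "2*c1 = a1*z1 - D*a2*z2" using c1_def d w by algebra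
  have 4: "2*c2 = a2*z1 - a1*z2" using c2_def h w by algebra
  show ?thesis using 1 2 3 4 by blast
qed

theorem corollary3p3:
  fixes D k :: int and z :: zd
  assumes "squarefree D"
    and "D mod 4 = 2"
    and "zirreducible D (2, 0)"
    and "\<not> zprime D (2, 0)"
    and "z \<in> I2 D"
    and "znorm D z = 2 * k"
    and "k mod 4 = 3"
  shows "CZ D (A2 D z) \<longleftrightarrow>
    (\<exists>b1 b2 :: int. 0 = (2 + k) * b1 ^ 2 - (2 + k) * D * b2 ^ 2
                          - 2 * fst z * b1 + 2 * snd z * D * b2 - 2)"
proof -
  obtain z1 z2 where z: "z = (z1, z2)" by fastforce
  have hz: "z1^2 - D*z2^2 = 2*k" using assms(6) z by (simp add: znorm_def)
  have kd: "(z1^2 - D*z2^2) div 2 = k" using hz by simp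
  have CZe: "CZ D (A2 D z) \<longleftrightarrow> (\<exists>a1 a2 b1 b2 c1 c2.
        a1 * (1 - a1) - D * a2 * a2 = b1 * c1 + D * b2 * c2 \<and>
        a2 * (1 - a1) - a1 * a2 = b1 * c2 + b2 * c1 \<and>
        a1 * a1 - D * a2 * a2 + (b1 * b1 - D * b2 * b2) = 2 \<and>
        z1 = a1 * c1 - D * a2 * c2 + (b1 * (1 - a1) + D * b2 * a2) \<and>
        z2 = a2 * c1 - a1 * c2 + (b1 * a2 + b2 * (1 - a1)) \<and>
        z1 = c1 * a1 - D * c2 * a2 + ((1 - a1) * b1 + D * a2 * b2) \<and>
        - z2 = c2 * a1 - c1 * a2 + (- (a2 * b1) - (1 - a1) * b2) \<and>
        k = c1 * c1 - D * c2 * c2 + ((1 - a1) * (1 - a1) - D * a2 * a2))"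
    by (simp add: CZ_def A2_def zmatmul_def zmul_def zadd_def zsub_def zconj_def znorm_def z kd)
  show ?thesis
  proof
    assume "CZ D (A2 D z)"
    then obtain a1 a2 b1 b2 c1 c2 where
      i1: "a1 * (1 - a1) - D * a2 * a2 = b1 * c1 + D * b2 * c2" and
      i2: "a2 * (1 - a1) - a1 * a2 = b1 * c2 + b2 * c1" and
      e11: "a1 * a1 - D * a2 * a2 + (b1 * b1 - D * b2 * b2) = 2" and
      e21a: "z1 = c1 * a1 - D * c2 * a2 + ((1 - a1) * b1 + D * a2 * b2)" and
      e21b: "- z2 = c2 * a1 - c1 * a2 + (- (a2 * b1) - (1 - a1) * b2)"
      using CZe by blast
    show "\<exists>b1 b2 :: int. 0 = (2 + k) * b1 ^ 2 - (2 + k) * D * b2 ^ 2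
                          - 2 * fst z * b1 + 2 * snd z * D * b2 - 2"
      apply (rule exI[of _ b1], rule exI[of _ b2])
      using fwd_alg[OF hz i1 i2 e11 e21a e21b] z by simp
  next
    assume "\<exists>b1 b2 :: int. 0 = (2 + k) * b1 ^ 2 - (2 + k) * D * b2 ^ 2
                          - 2 * fst z * b1 + 2 * snd z * D * b2 - 2"
    then obtain b1 b2 where heq: "0 = (2 + k) * b1 ^ 2 - (2 + k) * D * b2 ^ 2
                          - 2 * z1 * b1 + 2 * z2 * D * b2 - 2" using z by auto
    obtain a1 a2 c1 c2 where ha1: "2*a1 = 2 - (b1*z1 - D*b2*z2)" and ha2: "2*a2 = -(b2*z1 - b1*z2)"
      and hc1: "2*c1 = a1*z1 - D*a2*z2" and hc2: "2*c2 = a2*z1 - a1*z2"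
      using parity[OF assms(2) assms(7) hz heq] by blast
    note G = g1[OF hz ha1 ha2 hc1 hc2 heq] g2[OF hz ha1 ha2 hc1 hc2 heq] g3[OF hz ha1 ha2 hc1 hc2 heq]
      g5[OF hz ha1 ha2 hc1 hc2 heq] g6[OF hz ha1 ha2 hc1 hc2 heq] g7[OF hz ha1 ha2 hc1 hc2 heq]
    show "CZ D (A2 D z)" unfolding CZe
      apply (rule exI[of _ a1], rule exI[of _ a2], rule exI[of _ b1], rule exI[of _ b2],
             rule exI[of _ c1], rule exI[of _ c2])
      apply (intro conjI)
      using G(1) apply (simp add: algebra_simps)
      using G(2) apply (simp add: algebra_simps)
      using G(3) apply (simp add: algebra_simps)
      using G(4) apply (simp add: algebra_simps)
      using G(5) apply (simp add: algebra_simps)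
      using G(4) apply (simp add: algebra_simps)
      using G(5) apply (simp add: algebra_simps)
      using G(6) apply (simp add: algebra_simps)
      done
  qed
qed

end
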